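(* For a prime $p$ and integer $d \ge 1$, let $t = \lfloor 2d/(p-1) \rfloor$ and \[ B'(p,d) = 2 + \left\lfloor \frac{pt + (p-1)\lambda_p(t)}{d} \right\rfloor, \] where for $m = \sum_{i=0}^s c_i p^i$ with $0 \le c_i < p$ one sets $\lambda_p(m) = \sum_{i=0}^s i c_i p^i$. Then: \begin{enumerate} \item If $p \ge 5$ and $p \ge d$, then $B'(p,d) = 2$ if $p > 2d+1$; $B'(p,d) = 4$ if $p = 2d+1$ or $p = d$; and $B'(p,d) = 3$ if $d+1 < p < 2d+1$. \item If $5 \le p \le d$, then $B'(p,d) \ge 3$. \item $B'(3,1) = B'(3,2) = 5$, and $B'(3,d) \ge 6$ for $d \ge 3$. \item $B'(2,1) = 8$, $B'(2,2) = 10$, $B'(2,3) = 9$, and $B'(2,d) \ge 9$ for $d \ge 4$. \item For any prime $p$, if $(p-1) \mid 2d$, then $B'(p,d) \ge 4 + 2 v_p(d) + 4 v_2(p) + v_p(3)$, with equality when $\frac{2d}{p^{v_p(2d)}(p-1)} < p$. \end{enumerate}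
   Context: $v_p$ denotes the $p$-adic valuation (so $v_2(p) = 1$ if $p = 2$ and $0$ otherwise, and $v_p(3) = 1$ if $p=3$ and $0$ otherwise). Note $B'(p,d) = \lfloor B(p,d)/d \rfloor$ where $B(p,d) = 2d + pt + (p-1)\lambda_p(t)$ is the Brumer–Kramer conductor bound. *)

theory Defs
  imports "HOL-Computational_Algebra.Computational_Algebra"
begin

text \<open>For p >= 2 all digits with index i > m
  vanish (p^i > m), so summing over i in {..m} covers all digits.\<close>
definition lambda_p :: "nat \<Rightarrow> nat \<Rightarrow> nat" where
  "lambda_p p m = (\<Sum>i\<le>m. i * ((m div p ^ i) mod p) * p ^ i)"

definition t_pd :: "nat \<Rightarrow> nat \<Rightarrow> nat" where
  "t_pd p d = (2 * d) div (p - 1)"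

definition B' :: "nat \<Rightarrow> nat \<Rightarrow> nat" where
  "B' p d = 2 + (p * t_pd p d + (p - 1) * lambda_p p (t_pd p d)) div d"

end

theory Submission
  imports Defs
begin

lemma digits_sum: "(\<Sum>j<N. ((n div p^j) mod p) * p^j) = (n::nat) mod p^N"
proof (induction N)
  case 0 then show ?case by simp
next
  case (Suc N)
  have "n mod p ^ Suc N = n mod (p^N * p)" by (simp add: mult.commute)
  also have "\<dots> = p^N * (n div p^N mod p) + n mod p^N" by (rule mod_mult2_eq)
  finally show ?case using Suc by simp
qed

lemma pow_big: "2 \<le> (p::nat) \<Longrightarrow> m < p ^ m"
proof -
  assume "2 \<le> p"
  have "m < 2 ^ m" by simp
  also have "(2::nat) ^ m \<le> p ^ m" using \<open>2 \<le> p\<close> by (simp add: power_mono)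
  finally show ?thesis .
qed

lemma lam_ext:
  assumes "2 \<le> p" "m < N"
  shows "lambda_p p m = (\<Sum>i<N. i * ((m div p^i) mod p) * p^i)"
proof -
  have U: "{..<N} = {..m} \<union> {m<..<N}" using assms(2) by auto
  have Z: "(\<Sum>i\<in>{m<..<N}. i * ((m div p^i) mod p) * p^i) = 0"
  proof (rule sum.neutral, intro ballI)
    fix i assume "i \<in> {m<..<N}"
    hence "m < i" by simp
    also have "i < p ^ i" using pow_big[OF assms(1)] .
    finally show "i * ((m div p^i) mod p) * p^i = 0" by simp
  qed
  show ?thesis unfolding lambda_p_def U
    by (subst sum.union_disjoint) (auto simp: Z)
qed

lemma lam_rec:
  assumes "2 \<le> p"
  shows "lambda_p p m = p * (lambda_p p (m div p) + m div p)"
proof (cases "m = 0")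
  case True then show ?thesis by (simp add: lambda_p_def)
next
  case False
  define q where "q = m div p"
  have qm: "q < m" using False assms by (simp add: q_def)
  have "lambda_p p m = (\<Sum>i<Suc m. i * ((m div p^i) mod p) * p^i)"
    by (rule lam_ext[OF assms]) simp
  also have "\<dots> = (\<Sum>j<m. Suc j * ((m div p^Suc j) mod p) * p^Suc j)"
    by (subst sum.lessThan_Suc_shift) simp
  also have "\<dots> = (\<Sum>j<m. p * (j * ((q div p^j) mod p) * p^j + ((q div p^j) mod p) * p^j))"
  proof (rule sum.cong[OF refl])
    fix j
    have "m div p ^ Suc j = q div p^j" by (simp add: q_def div_mult2_eq)
    then show "Suc j * ((m div p^Suc j) mod p) * p^Suc j = p * (j * ((q div p^j) mod p) * p^j + ((q div p^j) mod p) * p^j)"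
      by (simp add: algebra_simps)
  qed
  also have "\<dots> = p * ((\<Sum>j<m. j * ((q div p^j) mod p) * p^j) + (\<Sum>j<m. ((q div p^j) mod p) * p^j))"
    by (simp add: sum_distrib_left[symmetric] sum.distrib[symmetric])
  also have "(\<Sum>j<m. j * ((q div p^j) mod p) * p^j) = lambda_p p q"
    by (rule lam_ext[OF assms qm, symmetric])
  also have "(\<Sum>j<m. ((q div p^j) mod p) * p^j) = q"
  proof -
    have "q < p ^ m" using qm pow_big[OF assms, of m] by simp
    thus ?thesis by (simp add: digits_sum)
  qed
  finally show ?thesis by (simp add: q_def)
qed

lemma lam_small: "2 \<le> p \<Longrightarrow> m < p \<Longrightarrow> lambda_p p m = 0"
  by (subst lam_rec) (auto simp: lambda_p_def)

lemma lam_ge: "2 \<le> p \<Longrightarrow> p * (m div p) \<le> lambda_p p m"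
  by (subst lam_rec) auto

lemma lam_pow:
  assumes "2 \<le> p"
  shows "k * (p^k * u) \<le> lambda_p p (p^k * u) \<and> (u < p \<longrightarrow> lambda_p p (p^k * u) = k * (p^k * u))"
proof (induction k)
  case 0 then show ?case using lam_small[OF assms] by simp
next
  case (Suc k)
  have d: "p^Suc k * u div p = p^k * u" using assms by simp
  have e: "lambda_p p (p^Suc k * u) = p * (lambda_p p (p^k * u) + p^k * u)"
    by (subst lam_rec[OF assms]) (simp only: d)
  show ?case
  proof
    show "Suc k * (p ^ Suc k * u) \<le> lambda_p p (p ^ Suc k * u)"
      using Suc.IH unfolding e by (simp add: algebra_simps)
    show "u < p \<longrightarrow> lambda_p p (p ^ Suc k * u) = Suc k * (p ^ Suc k * u)"
      using Suc.IH unfolding e by (simp add: algebra_simps)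
  qed
qed


lemma le_divI: "0 < d \<Longrightarrow> k * d \<le> x \<Longrightarrow> k \<le> x div (d::nat)"
  using div_le_mono[of "k*d" x d] by simp

lemma part1:
  fixes p d :: nat
  assumes "prime p" "d \<ge> 1" "p \<ge> 5" "p \<ge> d"
  shows "(p > 2 * d + 1 \<longrightarrow> B' p d = 2) \<and>
        (p = 2 * d + 1 \<or> p = d \<longrightarrow> B' p d = 4) \<and>
        (d + 1 < p \<and> p < 2 * d + 1 \<longrightarrow> B' p d = 3)"
proof (intro conjI impI)
  have p2: "2 \<le> p" using assms by simp
  show "B' p d = 2" if "p > 2 * d + 1"
  proof -
    have "t_pd p d = 0" unfolding t_pd_def using that by simp
    thus ?thesis unfolding B'_def by (simp add: lambda_p_def)
  qed
  show "B' p d = 4" if "p = 2 * d + 1 \<or> p = d"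
    using that
  proof
    assume h: "p = 2 * d + 1"
    have "t_pd p d = 1" unfolding t_pd_def using h assms by simp
    moreover have "(2 * d + 1) div d = 2" using h assms by (intro div_nat_eqI) auto
    ultimately show ?thesis unfolding B'_def using lam_small[OF p2, of 1] p2 h by simp
  next
    assume h: "p = d"
    have "t_pd p d = 2" unfolding t_pd_def using h assms by (intro div_nat_eqI) auto
    moreover have "(p * 2) div d = 2" using h assms by simp
    ultimately show ?thesis unfolding B'_def using lam_small[OF p2, of 2] assms by simp
  qed
  show "B' p d = 3" if "d + 1 < p \<and> p < 2 * d + 1"
  proof -
    have "odd p" using prime_odd_nat[OF assms(1)] assms by simp
    hence "p \<noteq> 2 * d" by auto
    hence pl: "p < 2 * d" using that by simp
    have "t_pd p d = 1" unfolding t_pd_def using that pl by (intro div_nat_eqI) auto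
    moreover have "p div d = 1" using that pl by (intro div_nat_eqI) auto
    ultimately show ?thesis unfolding B'_def using lam_small[OF p2, of 1] assms by simp
  qed
qed

lemma part2:
  fixes p d :: nat
  assumes "prime p" "5 \<le> p" "p \<le> d"
  shows "B' p d \<ge> 3"
proof -
  define t where "t = t_pd p d"
  have "2 * d = (p - 1) * t + 2 * d mod (p - 1)" unfolding t_def t_pd_def by simp
  moreover have "2 * d mod (p - 1) < p - 1" using assms by simp
  ultimately have "d \<le> (p - 1) * t" using assms by linarith
  also have "\<dots> \<le> p * t" by simp
  also have "\<dots> \<le> p * t + (p - 1) * lambda_p p t" by simp
  finally have "1 \<le> (p * t + (p - 1) * lambda_p p t) div d"
    using assms by (intro le_divI) auto
  thus ?thesis unfolding B'_def t_def by simp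
qed


lemma part3: "B' 3 1 = 5 \<and> B' 3 2 = 5 \<and> (d \<ge> 3 \<longrightarrow> B' 3 d \<ge> 6)"
proof (intro conjI impI)
  show "B' 3 1 = 5" unfolding B'_def t_pd_def using lam_small[of 3 1] by simp
  show "B' 3 2 = 5" unfolding B'_def t_pd_def using lam_small[of 3 2] by simp
  assume d: "d \<ge> 3"
  have t: "t_pd 3 d = d" unfolding t_pd_def by simp
  have l: "3 * (d div 3) \<le> lambda_p 3 d" using lam_ge[of 3 d] by simp
  have "d = 3 * (d div 3) + d mod 3" by simp
  moreover have "d mod 3 < 3" by simp
  moreover have "1 \<le> d div 3" using d by (intro le_divI) auto
  ultimately have "4 * d \<le> 3 * d + 2 * lambda_p 3 d" using l d by linarith
  hence "4 \<le> (3 * d + 2 * lambda_p 3 d) div d" using d by (intro le_divI) (auto simp: mult.commute)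
  thus "B' 3 d \<ge> 6" unfolding B'_def t by simp
qed

lemma part4: "B' 2 1 = 8 \<and> B' 2 2 = 10 \<and> B' 2 3 = 9 \<and> (d \<ge> 4 \<longrightarrow> B' 2 d \<ge> 9)"
proof (intro conjI impI)
  have l1: "lambda_p 2 1 = 0" using lam_small[of 2 1] by simp
  have l2: "lambda_p 2 2 = 2" using lam_rec[of 2 2] l1 by simp
  have l3: "lambda_p 2 3 = 2" using lam_rec[of 2 3] l1 by simp
  have l4: "lambda_p 2 4 = 8" using lam_rec[of 2 4] l2 by simp
  have l6: "lambda_p 2 6 = 10" using lam_rec[of 2 6] l3 by simp
  show "B' 2 1 = 8" unfolding B'_def t_pd_def using l2 by simp
  show "B' 2 2 = 10" unfolding B'_def t_pd_def using l4 by simp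
  show "B' 2 3 = 9" unfolding B'_def t_pd_def using l6 by simp
  assume d: "d \<ge> 4"
  have t: "t_pd 2 d = 2 * d" unfolding t_pd_def by simp
  have r: "lambda_p 2 (2 * d) = 2 * (lambda_p 2 d + d)" using lam_rec[of 2 "2*d"] by simp
  have l: "2 * (d div 2) \<le> lambda_p 2 d" using lam_ge[of 2 d] by simp
  have "d = 2 * (d div 2) + d mod 2" by simp
  moreover have "d mod 2 < 2" by simp
  moreover have "1 \<le> d div 2" using d by (intro le_divI) auto
  ultimately have "d \<le> 2 * lambda_p 2 d" using l d by linarith
  hence "7 * d \<le> 2 * (2 * d) + lambda_p 2 (2 * d)" unfolding r by (simp add: algebra_simps)
  hence "7 \<le> (2 * (2 * d) + lambda_p 2 (2 * d)) div d" using d by (intro le_divI) (auto simp: mult.commute)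
  thus "B' 2 d \<ge> 9" unfolding B'_def t by simp
qed


lemma part5:
  fixes p d :: nat
  assumes pp: "prime p" and d1: "d \<ge> 1" and dv: "(p - 1) dvd (2 * d)"
  shows "B' p d \<ge> 4 + 2 * multiplicity p d + 4 * multiplicity 2 p + multiplicity p 3 \<and>
        (real (2 * d) / (real (p ^ multiplicity p (2 * d)) * real (p - 1)) < real p \<longrightarrow>
          B' p d = 4 + 2 * multiplicity p d + 4 * multiplicity 2 p + multiplicity p 3)"
proof -
  define k where "k = multiplicity p d"
  have nu: "\<not> is_unit p" using pp not_prime_unit by blast
  have d0: "d \<noteq> 0" using d1 by simp
  obtain w where dw: "d = p ^ k * w" and nw: "\<not> p dvd w"
    using multiplicity_decompose'[OF d0 nu] unfolding k_def by blast
  have p2: "2 \<le> p" using pp prime_ge_2_nat by blast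
  have w1: "w \<ge> 1" using dw d0 by (cases w) auto
  show ?thesis
  proof (cases "p = 2")
    case True
    have m2: "multiplicity 2 p = 1" using True by (simp add: multiplicity_self)
    have m3: "multiplicity p 3 = 0" using True by (intro not_dvd_imp_multiplicity_0) simp
    have t: "t_pd p d = 2 ^ Suc k * w" unfolding t_pd_def using True dw by simp
    have X: "p * t_pd p d + (p - 1) * lambda_p p (t_pd p d) = 4 * d + lambda_p 2 (2 ^ Suc k * w)"
      using True t dw by simp
    have lp: "Suc k * (2 ^ Suc k * w) \<le> lambda_p 2 (2 ^ Suc k * w) \<and>
       (w < 2 \<longrightarrow> lambda_p 2 (2 ^ Suc k * w) = Suc k * (2 ^ Suc k * w))"
      using lam_pow[of 2 "Suc k" w] by simp
    have e2: "2 ^ Suc k * w = 2 * d" using dw True by simp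
    have "(2 * k + 6) * d \<le> 4 * d + lambda_p 2 (2 ^ Suc k * w)"
      using lp unfolding e2 by (simp add: algebra_simps)
    hence "2 * k + 6 \<le> (4 * d + lambda_p 2 (2 ^ Suc k * w)) div d"
      using d1 by (intro le_divI) auto
    hence ge: "B' p d \<ge> 4 + 2 * multiplicity p d + 4 * multiplicity 2 p + multiplicity p 3"
      unfolding B'_def X m2 m3 k_def[symmetric] by simp
    moreover have "B' p d = 4 + 2 * multiplicity p d + 4 * multiplicity 2 p + multiplicity p 3"
      if c: "real (2 * d) / (real (p ^ multiplicity p (2 * d)) * real (p - 1)) < real p"
    proof -
      have "multiplicity p (2 * d) = Suc k"
        unfolding k_def using True d1 multiplicity_times_same[of d 2] by simp
      hence "real (2 * d) / real (2 ^ Suc k) < 2" using c True by simp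
      hence "real (2 ^ Suc k * w) / real (2 ^ Suc k) < 2" by (simp only: e2)
      moreover have "real (2 ^ Suc k * w) / real (2 ^ Suc k) = real w"
        by (simp del: power_Suc)
      ultimately have "real w < 2" by simp
      hence w2: "w < 2" by simp
      have "4 * d + lambda_p 2 (2 ^ Suc k * w) = (2 * k + 6) * d"
        using lp w2 unfolding e2 by (simp add: algebra_simps)
      hence "(4 * d + lambda_p 2 (2 ^ Suc k * w)) div d = 2 * k + 6" using d1 by simp
      thus ?thesis unfolding B'_def X m2 m3 k_def[symmetric] by simp
    qed
    ultimately show ?thesis by blast
  next
    case False
    hence p3: "p \<ge> 3" using p2 by simp
    have op: "odd p" using prime_odd_nat[OF pp] p3 by simp
    have m2: "multiplicity 2 p = 0" using op by (intro not_dvd_imp_multiplicity_0) simp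
    have m3: "multiplicity p 3 = (if p = 3 then 1 else 0)"
    proof (cases "p = 3")
      case True thus ?thesis by (simp add: multiplicity_self)
    next
      case False
      have "\<not> p dvd 3"
      proof
        assume "p dvd 3"
        hence "p = 3" using primes_dvd_imp_eq[OF pp, of 3] by simp
        with False show False ..
      qed
      thus ?thesis using False by (simp add: not_dvd_imp_multiplicity_0)
    qed
    have cop: "coprime (p - 1) (p ^ k)"
    proof -
      have "coprime (p - 1) p"
        using p2 coprime_diff_one_left_nat[of p] by simp
      thus ?thesis by simp
    qed
    have "(p - 1) dvd p ^ k * (2 * w)" using dv dw by (simp add: algebra_simps)
    hence "(p - 1) dvd 2 * w" using cop coprime_dvd_mult_right_iff by blast
    then obtain u where u: "2 * w = (p - 1) * u" by blast
    have tt: "2 * d = (p - 1) * (p ^ k * u)"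
    proof -
      have "2 * d = p ^ k * (2 * w)" using dw by (simp add: algebra_simps)
      also have "\<dots> = p ^ k * ((p - 1) * u)" by (simp only: u)
      also have "\<dots> = (p - 1) * (p ^ k * u)" by (rule mult.left_commute)
      finally show ?thesis .
    qed
    define t where "t = t_pd p d"
    have t: "t = p ^ k * u" unfolding t_def t_pd_def tt using p2 by simp
    have t2: "(p - 1) * t = 2 * d" using tt t by simp
    have "p * t = (p - 1) * t + t" using p2 by (cases p) auto
    hence pt: "p * t = 2 * d + t" using t2 by simp
    have lp: "k * t \<le> lambda_p p t \<and> (u < p \<longrightarrow> lambda_p p t = k * t)"
      using lam_pow[OF p2, of k u] t by simp
    have "(p - 1) * (k * t) = k * ((p - 1) * t)" by (simp add: algebra_simps)
    hence kt: "(p - 1) * (k * t) = 2 * k * d" using t2 by simp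
    have lo: "(2 + 2 * k) * d + t \<le> p * t + (p - 1) * lambda_p p t"
    proof -
      have "(p - 1) * (k * t) \<le> (p - 1) * lambda_p p t" using lp by simp
      thus ?thesis using kt pt by (simp add: algebra_simps)
    qed
    have tdiv: "t div d = (if p = 3 then 1 else 0)"
    proof (cases "p = 3")
      case True thus ?thesis using t2 d1 by simp
    next
      case False
      hence "p \<ge> 5" using p3 op by presburger
      hence "4 \<le> p - 1" by simp
      hence "4 * t \<le> (p - 1) * t" by (rule mult_right_mono) simp
      hence "4 * t \<le> 2 * d" using t2 by linarith
      hence "t < d" using d1 by linarith
      thus ?thesis using False by simp
    qed
    have "((2 + 2 * k) * d + t) div d = 2 + 2 * k + t div d"
      using div_mult_self3[of d "2 + 2 * k" t] d1 by simp
    hence "2 + 2 * k + t div d \<le> (p * t + (p - 1) * lambda_p p t) div d"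
      using div_le_mono[OF lo, of d] by simp
    hence ge: "B' p d \<ge> 4 + 2 * multiplicity p d + 4 * multiplicity 2 p + multiplicity p 3"
      unfolding B'_def t_def[symmetric] m2 m3 k_def[symmetric] using tdiv by simp
    moreover have "B' p d = 4 + 2 * multiplicity p d + 4 * multiplicity 2 p + multiplicity p 3"
      if c: "real (2 * d) / (real (p ^ multiplicity p (2 * d)) * real (p - 1)) < real p"
    proof -
      have "\<not> p dvd 2"
      proof
        assume "p dvd 2"
        hence "p \<le> 2" by (rule dvd_imp_le) simp
        with p3 show False by simp
      qed
      hence "multiplicity p 2 = 0" by (simp add: not_dvd_imp_multiplicity_0)
      hence "multiplicity p (2 * d) = k"
        unfolding k_def using d1 pp prime_elem_multiplicity_mult_distrib[of p 2 d] by simp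
      hence "real (2 * d) / (real (p ^ k) * real (p - 1)) < real p" using c by simp
      moreover have "real (2 * d) = (real (p ^ k) * real (p - 1)) * real u"
        unfolding tt of_nat_mult by (simp only: mult_ac)
      moreover have "real (p ^ k) * real (p - 1) \<noteq> 0" using p2 by simp
      ultimately have "real u < real p"
        using nonzero_mult_div_cancel_left[of "real (p ^ k) * real (p - 1)" "real u"] by simp
      hence "u < p" by simp
      hence "lambda_p p t = k * t" using lp by simp
      hence "p * t + (p - 1) * lambda_p p t = (2 + 2 * k) * d + t" using kt pt by (simp add: algebra_simps)
      hence "(p * t + (p - 1) * lambda_p p t) div d = 2 + 2 * k + t div d"
        using \<open>((2 + 2 * k) * d + t) div d = 2 + 2 * k + t div d\<close> by simp
      thus ?thesis unfolding B'_def t_def[symmetric] m2 m3 k_def[symmetric] using tdiv by simp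
    qed
    ultimately show ?thesis by blast
  qed
qed

theorem lemma3p2:
  fixes p d :: nat
  assumes "prime p" and "d \<ge> 1"
  shows
    "(p \<ge> 5 \<and> p \<ge> d \<longrightarrow>
        (p > 2 * d + 1 \<longrightarrow> B' p d = 2) \<and>
        (p = 2 * d + 1 \<or> p = d \<longrightarrow> B' p d = 4) \<and>
        (d + 1 < p \<and> p < 2 * d + 1 \<longrightarrow> B' p d = 3))
   \<and> (5 \<le> p \<and> p \<le> d \<longrightarrow> B' p d \<ge> 3)
   \<and> (p = 3 \<longrightarrow> B' 3 1 = 5 \<and> B' 3 2 = 5 \<and> (d \<ge> 3 \<longrightarrow> B' 3 d \<ge> 6))
   \<and> (p = 2 \<longrightarrow> B' 2 1 = 8 \<and> B' 2 2 = 10 \<and> B' 2 3 = 9 \<and> (d \<ge> 4 \<longrightarrow> B' 2 d \<ge> 9))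
   \<and> ((p - 1) dvd (2 * d) \<longrightarrow>
        B' p d \<ge> 4 + 2 * multiplicity p d + 4 * multiplicity 2 p + multiplicity p 3 \<and>
        (real (2 * d) / (real (p ^ multiplicity p (2 * d)) * real (p - 1)) < real p \<longrightarrow>
          B' p d = 4 + 2 * multiplicity p d + 4 * multiplicity 2 p + multiplicity p 3))"
  using part1[OF assms] part2[OF assms(1)] part3[of d] part4[of d] part5[OF assms]
  by blast

end
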